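(* Let $r\in\mathbb{N}$ and suppose $S_N$ admits the Edgeworth expansion of order $r$, i.e. there are polynomials $P_1,\dots,P_r$ with $\mathbb{P}\big(\frac{S_N-NA}{\sqrt N}\leq z\big)-\mathfrak{N}(z)=\sum_{p=1}^rN^{-p/2}P_p(z)\mathfrak{n}(z)+o(N^{-r/2})$ uniformly in $z\in\mathbb{R}$. Then for every $c\in(0,r)$ and every sequence $(x_N)$ with $1\leq x_N\leq\sqrt{c\sigma^2\ln N}$, $$\lim_{N\to\infty}\frac{1-\mathbb{P}\Big(\frac{S_N-AN}{\sqrt{N}}\leq x_N\Big)}{1-\mathfrak{N}(x_N)}=1.$$
   Context: $X_1,X_2,\dots$ are real random variables, $S_N=\sum_{n=1}^N X_n$, $A\in\mathbb{R}$, $\sigma^2>0$, $\mathfrak{n}(y)=\frac{1}{\sqrt{2\pi\sigma^2}}e^{-y^2/(2\sigma^2)}$, $\mathfrak{N}(z)=\int_{-\infty}^z\mathfrak{n}(y)\,dy$. *)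

theory Defs
  imports "HOL-Probability.Probability" "HOL-Computational_Algebra.Polynomial"
begin

definition gauss_dens :: "real \<Rightarrow> real \<Rightarrow> real" where
  "gauss_dens sig2 y = 1 / sqrt (2 * pi * sig2) * exp (- y\<^sup>2 / (2 * sig2))"

definition gauss_cdf :: "real \<Rightarrow> real \<Rightarrow> real" where
  "gauss_cdf sig2 z = (LINT y:{..z}|lborel. gauss_dens sig2 y)"

definition partial_sum :: "(nat \<Rightarrow> 'a \<Rightarrow> real) \<Rightarrow> nat \<Rightarrow> 'a \<Rightarrow> real" where
  "partial_sum X N \<omega> = (\<Sum>n=1..N. X n \<omega>)"

definition norm_sum_cdf :: "'a measure \<Rightarrow> (nat \<Rightarrow> 'a \<Rightarrow> real) \<Rightarrow> real \<Rightarrow> nat \<Rightarrow> real \<Rightarrow> real" where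
  "norm_sum_cdf M X A N z =
     measure M {\<omega> \<in> space M. (partial_sum X N \<omega> - real N * A) / sqrt (real N) \<le> z}"

definition edgeworth_expansion ::
  "'a measure \<Rightarrow> (nat \<Rightarrow> 'a \<Rightarrow> real) \<Rightarrow> real \<Rightarrow> real \<Rightarrow> nat \<Rightarrow> (nat \<Rightarrow> real poly) \<Rightarrow> bool" where
  "edgeworth_expansion M X A sig2 r P \<longleftrightarrow>
     (\<forall>\<epsilon>>0. \<forall>\<^sub>F N in sequentially. \<forall>z::real.
        \<bar>norm_sum_cdf M X A N z - gauss_cdf sig2 z
          - (\<Sum>p=1..r. real N powr (- real p / 2) * poly (P p) z * gauss_dens sig2 z)\<bar>
        \<le> \<epsilon> * real N powr (- real r / 2))"

end

theory Submission
  imports Defs "HOL-Real_Asymp.Real_Asymp"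
begin

lemma L_null:
  fixes x :: "nat \<Rightarrow> real"
  assumes "c > 0" "s > 0" "a > 0"
    and ev: "\<forall>\<^sub>F N in sequentially. 0 \<le> x N \<and> x N \<le> sqrt (c * s * ln (real N))"
  shows "((\<lambda>N. x N ^ k * real N powr (-a)) \<longlongrightarrow> 0) sequentially"
proof -
  have "((\<lambda>y::real. ln y powr (real k / 2) * y powr (-a)) \<longlongrightarrow> 0) at_top"
    using \<open>a > 0\<close> by real_asymp
  then have "((\<lambda>N. ln (real N) powr (real k / 2) * real N powr (-a)) \<longlongrightarrow> 0) sequentially"
    by (rule filterlim_compose[OF _ filterlim_real_sequentially])
  then have lim: "((\<lambda>N. sqrt (c * s) ^ k * (ln (real N) powr (real k / 2) * real N powr (-a))) \<longlongrightarrow> 0) sequentially"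
    using tendsto_mult_right_zero by blast
  show ?thesis
  proof (rule Lim_null_comparison[OF _ lim])
    show "\<forall>\<^sub>F N in sequentially. norm (x N ^ k * real N powr (-a))
          \<le> sqrt (c * s) ^ k * (ln (real N) powr (real k / 2) * real N powr (-a))"
      using ev eventually_ge_at_top[of 2]
    proof eventually_elim
      case (elim N)
      have ln: "ln (real N) > 0" using elim by simp
      have "x N ^ k \<le> sqrt (c * s * ln (real N)) ^ k"
        by (rule power_mono) (use elim in auto)
      also have "\<dots> = sqrt (c * s) ^ k * sqrt (ln (real N)) ^ k"
        by (simp add: real_sqrt_mult power_mult_distrib)
      also have "sqrt (ln (real N)) ^ k = ln (real N) powr (real k / 2)"
      proof -
        have "sqrt (ln (real N)) = ln (real N) powr (1/2)" using ln by (simp add: powr_half_sqrt)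
        then show ?thesis using ln by (simp add: powr_realpow[symmetric] powr_powr)
      qed
      finally have "x N ^ k \<le> sqrt (c * s) ^ k * ln (real N) powr (real k / 2)" .
      then have "x N ^ k * real N powr (-a) \<le> sqrt (c * s) ^ k * ln (real N) powr (real k / 2) * real N powr (-a)"
        by (rule mult_right_mono) simp
      then show ?case using elim by (simp add: mult.assoc)
    qed
  qed
qed

lemma poly_bound:
  fixes q :: "real poly"
  assumes "1 \<le> y"
  shows "\<bar>poly q y\<bar> \<le> (\<Sum>i\<le>degree q. \<bar>coeff q i\<bar>) * y ^ degree q"
proof -
  have "\<bar>poly q y\<bar> = \<bar>\<Sum>i\<le>degree q. coeff q i * y ^ i\<bar>" by (simp add: poly_altdef)
  also have "\<dots> \<le> (\<Sum>i\<le>degree q. \<bar>coeff q i * y ^ i\<bar>)" by (rule sum_abs)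
  also have "\<dots> \<le> (\<Sum>i\<le>degree q. \<bar>coeff q i\<bar> * y ^ degree q)"
  proof (rule sum_mono)
    fix i assume "i \<in> {..degree q}"
    then have "y ^ i \<le> y ^ degree q" using assms by (intro power_increasing) auto
    then show "\<bar>coeff q i * y ^ i\<bar> \<le> \<bar>coeff q i\<bar> * y ^ degree q"
      using assms by (simp add: abs_mult mult_left_mono)
  qed
  also have "\<dots> = (\<Sum>i\<le>degree q. \<bar>coeff q i\<bar>) * y ^ degree q" by (simp add: sum_distrib_right)
  finally show ?thesis .
qed

lemma gauss_dens_eq: "s > 0 \<Longrightarrow> gauss_dens s = normal_density 0 (sqrt s)"
  by (auto simp: fun_eq_iff gauss_dens_def normal_density_def)

lemma gauss_dens_pos: "s > 0 \<Longrightarrow> gauss_dens s y > 0"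
  by (simp add: gauss_dens_def)

lemma gauss_tail_lower:
  assumes s: "s > 0" and x: "1 \<le> x"
  shows "1 - gauss_cdf s x \<ge> exp (- 3 / (2 * s)) / x * gauss_dens s x"
proof -
  define g where "g = gauss_dens s"
  define b where "b = x + 1 / x"
  have xb: "x < b" using x by (simp add: b_def)
  have int: "integrable lborel g" unfolding g_def gauss_dens_eq[OF s] using s by (simp add: integrable_normal_density)
  have gnn: "\<And>y. 0 \<le> g y" unfolding g_def using gauss_dens_pos[OF s] less_imp_le by blast
  have si: "\<And>S. S \<in> sets lborel \<Longrightarrow> set_integrable lborel S g"
    unfolding set_integrable_def using integrable_mult_indicator[OF _ int] by blast
  have "gauss_cdf s b = (LINT y:{..x}|lborel. g y) + (LINT y:{x<..b}|lborel. g y)"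
  proof -
    have "{..b} = {..x} \<union> {x<..b}" using xb by auto
    moreover have "(LINT y:{..x}\<union>{x<..b}|lborel. g y) = (LINT y:{..x}|lborel. g y) + (LINT y:{x<..b}|lborel. g y)"
      by (rule set_integral_Un) (auto intro: si)
    ultimately show ?thesis unfolding gauss_cdf_def g_def[symmetric] by simp
  qed
  then have diff: "gauss_cdf s b - gauss_cdf s x = (LINT y:{x<..b}|lborel. g y)"
    unfolding gauss_cdf_def g_def by simp
  have le1: "gauss_cdf s b \<le> 1"
  proof -
    have "gauss_cdf s b = (LINT y|lborel. indicator {..b} y * g y)"
      unfolding gauss_cdf_def g_def set_lebesgue_integral_def by simp
    also have "\<dots> \<le> (LINT y|lborel. g y)"
    proof (rule integral_mono)
      show "integrable lborel (\<lambda>y. indicator {..b} y * g y)"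
        using integrable_mult_indicator[OF _ int, of "{..b}"] by simp
    qed (use int gnn in \<open>auto simp: indicator_def\<close>)
    also have "\<dots> = 1" unfolding g_def gauss_dens_eq[OF s] using s by (simp add: integral_normal_density)
    finally show ?thesis .
  qed
  have mono: "(LINT y:{x<..b}|lborel. g b) \<le> (LINT y:{x<..b}|lborel. g y)"
  proof (rule set_integral_mono)
    show "set_integrable lborel {x<..b} g" by (rule si) simp
    show "set_integrable lborel {x<..b} (\<lambda>y. g b)"
      unfolding set_integrable_def
      using integrable_real_indicator[of "{x<..b}" lborel] xb by simp
    fix y assume "y \<in> {x<..b}"
    then have "0 \<le> y" "y \<le> b" using x by auto
    then have "y^2 \<le> b^2" by (simp add: power_mono)
    then show "g b \<le> g y" unfolding g_def gauss_dens_def using s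
      by (simp add: divide_right_mono)
  qed
  have const: "(LINT y:{x<..b}|lborel. g b) = (b - x) * g b"
    using xb by (simp add: set_integral_const)
  have bb: "b^2 \<le> x^2 + 3"
  proof -
    have "b^2 = x^2 + 2 + 1/x^2" using x by (simp add: b_def power2_eq_square field_simps)
    moreover have "1/x^2 \<le> 1" using x by (simp add: field_simps)
    ultimately show ?thesis by linarith
  qed
  then have "- (b^2) / (2 * s) \<ge> - (x^2) / (2 * s) + (-3/(2 * s))"
    using s mult_left_mono[OF bb, of "2 * s"] by (simp add: field_simps)
  then have "exp (- (b^2) / (2 * s)) \<ge> exp (- (x^2) / (2 * s)) * exp (-3/(2 * s))"
    by (simp add: exp_add[symmetric])
  then have gb: "g b \<ge> g x * exp (-3/(2 * s))" unfolding g_def gauss_dens_def using s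
    by (simp add: divide_right_mono)
  have "exp (- 3 / (2 * s)) / x * g x = (b - x) * (g x * exp (-3/(2 * s)))"
    using x by (simp add: b_def)
  also have "\<dots> \<le> (b - x) * g b" using gb xb by (simp add: mult_left_mono)
  also have "\<dots> \<le> gauss_cdf s b - gauss_cdf s x" using diff mono const by simp
  also have "\<dots> \<le> 1 - gauss_cdf s x" using le1 by simp
  finally show ?thesis unfolding g_def .
qed

lemma gauss_dens_inv: "s > 0 \<Longrightarrow> 1 / gauss_dens s y = sqrt (2 * pi * s) * exp (y^2 / (2 * s))"
  by (simp add: gauss_dens_def exp_minus field_simps)

theorem proposition5p3:
  fixes M :: "'a measure" and X :: "nat \<Rightarrow> 'a \<Rightarrow> real"
    and A sig2 :: real and r :: nat and P :: "nat \<Rightarrow> real poly"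
  assumes "prob_space M"
    and "\<And>n. X n \<in> borel_measurable M"
    and "sig2 > 0"
    and "edgeworth_expansion M X A sig2 r P"
  shows "\<forall>c x. 0 < c \<and> c < real r \<and>
            (\<forall>\<^sub>F N in sequentially. 1 \<le> x N \<and> x N \<le> sqrt (c * sig2 * ln (real N))) \<longrightarrow>
          ((\<lambda>N. (1 - norm_sum_cdf M X A N (x N)) / (1 - gauss_cdf sig2 (x N)))
             \<longlongrightarrow> 1) sequentially"
proof (intro allI impI)
  fix c and x :: "nat \<Rightarrow> real"
  assume H: "0 < c \<and> c < real r \<and>
            (\<forall>\<^sub>F N in sequentially. 1 \<le> x N \<and> x N \<le> sqrt (c * sig2 * ln (real N)))"
  then have c0: "0 < c" and cr: "c < real r"
    and ev: "\<forall>\<^sub>F N in sequentially. 1 \<le> x N \<and> x N \<le> sqrt (c * sig2 * ln (real N))" by auto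
  have s: "sig2 > 0" by (rule assms(3))
  have ev0: "\<forall>\<^sub>F N in sequentially. 0 \<le> x N \<and> x N \<le> sqrt (c * sig2 * ln (real N))"
    using ev by eventually_elim auto
  define K where "K = exp (3 / (2 * sig2))"
  have K0: "K > 0" by (simp add: K_def)
  define F where "F N = norm_sum_cdf M X A N (x N)" for N
  define G where "G N = gauss_cdf sig2 (x N)" for N
  define D where "D N = (G N - F N) / (1 - G N)" for N
  define U where "U N = K * (x N * (\<Sum>p=1..r. real N powr (- real p / 2) * \<bar>poly (P p) (x N)\<bar>))
      + K * x N * real N powr (- real r / 2) / gauss_dens sig2 (x N)" for N
  have edge1: "\<forall>\<^sub>F N in sequentially. \<forall>z::real.
        \<bar>norm_sum_cdf M X A N z - gauss_cdf sig2 z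
          - (\<Sum>p=1..r. real N powr (- real p / 2) * poly (P p) z * gauss_dens sig2 z)\<bar>
        \<le> 1 * real N powr (- real r / 2)"
    using assms(4) unfolding edgeworth_expansion_def by (erule_tac x=1 in allE) simp
  have bound: "\<forall>\<^sub>F N in sequentially. norm (D N) \<le> U N"
    using ev edge1
  proof eventually_elim
    case (elim N)
    define y where "y = x N"
    have y1: "1 \<le> y" using elim by (simp add: y_def)
    define g where "g = gauss_dens sig2 y"
    have g0: "g > 0" unfolding g_def using gauss_dens_pos[OF s] .
    define S where "S = (\<Sum>p=1..r. real N powr (- real p / 2) * poly (P p) y * g)"
    define Sa where "Sa = (\<Sum>p=1..r. real N powr (- real p / 2) * \<bar>poly (P p) y\<bar>)"
    define E where "E = real N powr (- real r / 2)"
    have T: "1 - G N \<ge> exp (- 3 / (2 * sig2)) / y * g"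
      unfolding G_def g_def y_def using gauss_tail_lower[OF s] y1 y_def by simp
    have Tpos: "exp (- 3 / (2 * sig2)) / y * g > 0" using g0 y1 by simp
    have inv: "1 / (1 - G N) \<le> K * y / g"
    proof -
      have "1 / (1 - G N) \<le> 1 / (exp (- 3 / (2 * sig2)) / y * g)"
        using le_imp_inverse_le[OF T Tpos] by (simp only: inverse_eq_divide)
      also have "\<dots> = K * y / g" unfolding K_def using y1 g0 by (simp add: exp_minus field_simps)
      finally show ?thesis .
    qed
    have GF: "\<bar>G N - F N\<bar> \<le> \<bar>S\<bar> + E"
      using spec[OF elim(2), of y] unfolding F_def G_def S_def E_def g_def y_def by linarith
    have SS: "\<bar>S\<bar> \<le> Sa * g"
    proof -
      have "\<bar>S\<bar> \<le> (\<Sum>p=1..r. \<bar>real N powr (- real p / 2) * poly (P p) y * g\<bar>)"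
        unfolding S_def by (rule sum_abs)
      also have "\<dots> = Sa * g" unfolding Sa_def using g0
        by (simp add: sum_distrib_right abs_mult)
      finally show ?thesis .
    qed
    have "norm (D N) = \<bar>G N - F N\<bar> * (1 / (1 - G N))"
      unfolding D_def using T Tpos by (simp add: abs_div)
    also have "\<dots> \<le> (\<bar>S\<bar> + E) * (K * y / g)"
      using GF inv T Tpos by (intro mult_mono) auto
    also have "\<dots> \<le> (Sa * g + E) * (K * y / g)"
      using SS K0 y1 g0 by (intro mult_right_mono) auto
    also have "\<dots> = U N"
      unfolding U_def Sa_def E_def y_def[symmetric] g_def[symmetric] using g0 by (simp add: field_simps)
    finally show ?case .
  qed
  have U0: "(U \<longlongrightarrow> 0) sequentially"
  proof -
    have t1: "((\<lambda>N. x N * (\<Sum>p=1..r. real N powr (- real p / 2) * \<bar>poly (P p) (x N)\<bar>)) \<longlongrightarrow> 0) sequentially"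
      unfolding sum_distrib_left
    proof (rule tendsto_null_sum)
      fix p assume p: "p \<in> {1..r}"
      define d where "d = degree (P p)"
      define C where "C = (\<Sum>i\<le>d. \<bar>coeff (P p) i\<bar>)"
      have lim: "((\<lambda>N. C * (x N ^ Suc d * real N powr (- (1/2)))) \<longlongrightarrow> 0) sequentially"
        using L_null[OF c0 s _ ev0, of "1/2" "Suc d"] tendsto_mult_right_zero by simp
      show "((\<lambda>N. x N * (real N powr (- real p / 2) * \<bar>poly (P p) (x N)\<bar>)) \<longlongrightarrow> 0) sequentially"
      proof (rule Lim_null_comparison[OF _ lim])
        show "\<forall>\<^sub>F N in sequentially. norm (x N * (real N powr (- real p / 2) * \<bar>poly (P p) (x N)\<bar>))
            \<le> C * (x N ^ Suc d * real N powr (- (1/2)))"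
          using ev eventually_ge_at_top[of 1]
        proof eventually_elim
          case (elim N)
          have x1: "1 \<le> x N" using elim by simp
          have pw: "real N powr (- real p / 2) \<le> real N powr (- (1/2))"
            using p elim by (intro powr_mono) auto
          have pb: "\<bar>poly (P p) (x N)\<bar> \<le> C * x N ^ d"
            unfolding C_def d_def by (rule poly_bound[OF x1])
          have "norm (x N * (real N powr (- real p / 2) * \<bar>poly (P p) (x N)\<bar>))
              = x N * (real N powr (- real p / 2) * \<bar>poly (P p) (x N)\<bar>)" using x1 by simp
          also have "\<dots> \<le> x N * (real N powr (- (1/2)) * (C * x N ^ d))"
            using x1 pw pb by (intro mult_left_mono mult_mono) auto
          also have "\<dots> = C * (x N ^ Suc d * real N powr (- (1/2)))" by (simp add: field_simps)
          finally show ?case .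
        qed
      qed
    qed
    define B where "B = K * sqrt (2 * pi * sig2)"
    have lim2: "((\<lambda>N. B * (x N ^ 1 * real N powr (- ((real r - c) / 2)))) \<longlongrightarrow> 0) sequentially"
      using L_null[OF c0 s _ ev0, of "(real r - c) / 2" 1] cr tendsto_mult_right_zero by simp
    have t2: "((\<lambda>N. K * x N * real N powr (- real r / 2) / gauss_dens sig2 (x N)) \<longlongrightarrow> 0) sequentially"
    proof (rule Lim_null_comparison[OF _ lim2])
      show "\<forall>\<^sub>F N in sequentially. norm (K * x N * real N powr (- real r / 2) / gauss_dens sig2 (x N))
          \<le> B * (x N ^ 1 * real N powr (- ((real r - c) / 2)))"
        using ev eventually_ge_at_top[of 1]
      proof eventually_elim
        case (elim N)
        have x1: "1 \<le> x N" using elim by simp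
        have N0: "real N > 0" using elim by simp
        have lnN: "ln (real N) \<ge> 0" using elim by simp
        have "x N ^ 2 \<le> sqrt (c * sig2 * ln (real N)) ^ 2"
          using elim x1 by (intro power_mono) auto
        also have "\<dots> = c * sig2 * ln (real N)" using c0 s lnN by simp
        finally have x2: "x N ^ 2 \<le> c * sig2 * ln (real N)" .
        have "x N ^ 2 / (2 * sig2) \<le> c / 2 * ln (real N)"
          using x2 s by (simp add: field_simps)
        then have ex: "exp (x N ^ 2 / (2 * sig2)) \<le> real N powr (c / 2)"
          using N0 by (simp add: powr_def)
        have "norm (K * x N * real N powr (- real r / 2) / gauss_dens sig2 (x N))
            = K * x N * real N powr (- real r / 2) * (1 / gauss_dens sig2 (x N))"
          using x1 K0 gauss_dens_pos[OF s, of "x N"] by simp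
        also have "\<dots> = B * x N * (real N powr (- real r / 2) * exp (x N ^ 2 / (2 * sig2)))"
          unfolding gauss_dens_inv[OF s] B_def by (simp add: field_simps)
        also have "\<dots> \<le> B * x N * (real N powr (- real r / 2) * real N powr (c / 2))"
          using ex x1 K0 s by (intro mult_left_mono) (auto simp: B_def)
        also have "real N powr (- real r / 2) * real N powr (c / 2) = real N powr (- ((real r - c) / 2))"
        proof -
          have "- ((real r - c) / 2) = - real r / 2 + c / 2" by (simp add: field_simps)
          then show ?thesis by (simp only: powr_add)
        qed
        finally show ?case by (simp add: mult.assoc)
      qed
    qed
    have "((\<lambda>N. K * (x N * (\<Sum>p=1..r. real N powr (- real p / 2) * \<bar>poly (P p) (x N)\<bar>))
      + K * x N * real N powr (- real r / 2) / gauss_dens sig2 (x N)) \<longlongrightarrow> K * 0 + 0) sequentially"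
      by (intro tendsto_add tendsto_mult tendsto_const t1 t2)
    then show ?thesis unfolding U_def by simp
  qed
  have D0: "(D \<longlongrightarrow> 0) sequentially" by (rule Lim_null_comparison[OF bound U0])
  have "((\<lambda>N. 1 + D N) \<longlongrightarrow> 1 + 0) sequentially" by (intro tendsto_add tendsto_const D0)
  moreover have "\<forall>\<^sub>F N in sequentially. 1 + D N = (1 - F N) / (1 - G N)"
    using ev
  proof eventually_elim
    case (elim N)
    have y1: "1 \<le> x N" using elim by simp
    have "1 - G N \<ge> exp (- 3 / (2 * sig2)) / x N * gauss_dens sig2 (x N)"
      unfolding G_def using gauss_tail_lower[OF s y1] by simp
    moreover have "exp (- 3 / (2 * sig2)) / x N * gauss_dens sig2 (x N) > 0"
      using y1 gauss_dens_pos[OF s] by simp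
    ultimately have "1 - G N > 0" by linarith
    then show ?case unfolding D_def by (simp add: field_simps)
  qed
  ultimately show "((\<lambda>N. (1 - norm_sum_cdf M X A N (x N)) / (1 - gauss_cdf sig2 (x N))) \<longlongrightarrow> 1) sequentially"
    unfolding F_def[symmetric] G_def[symmetric] by (simp add: Lim_transform_eventually)
qed

end
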